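(* Let $M,N\in\Lambda_\bot^{001}$ be such that neither $M$ nor $N$ contains a subterm of the form $\lambda x.\bot$ or $(\bot)P$. If $\mathcal T(M)=\mathcal T(N)$ then $M=N$.
   Context: $\Lambda_\bot^{001}$: possibly infinite trees built from variables, a constant $\bot$, abstractions $\lambda x.M$ and applications $(M)N$, whose infinite branches all enter infinitely often the argument position $N$ of an application, up to α-equivalence. Resource terms: $s::=x\mid\lambda x.s\mid\langle s\rangle\bar t$, with $\bar t=[t_1,\dots,t_n]$ a finite multiset of resource terms. Taylor approximation $\ltimes$ is defined inductively: $x\ltimes x$; $s\ltimes M\Rightarrow\lambda x.s\ltimes\lambda x.M$; ($s\ltimes M$ and $t_i\ltimes N$ for all $1\le i\le n$) $\Rightarrow\langle s\rangle[t_1,\dots,t_n]\ltimes(M)N$; no resource term approximates $\bot$. $\mathcal T(M)=\{s : s\ltimes M\}$. *)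

theory Defs
  imports Main "HOL-Library.Multiset"
begin

text \<open>Possibly infinite lambda-trees with bottom, in de Bruijn notation
(so that alpha-equivalence becomes syntactic equality).\<close>
codatatype lterm = Var nat | Bot | Lam lterm | App lterm lterm

datatype dir = DLam | DFun | DArg

fun step :: "dir \<Rightarrow> lterm \<Rightarrow> lterm option" where
  "step DLam M = (case M of Lam P \<Rightarrow> Some P | _ \<Rightarrow> None)"
| "step DFun M = (case M of App P Q \<Rightarrow> Some P | _ \<Rightarrow> None)"
| "step DArg M = (case M of App P Q \<Rightarrow> Some Q | _ \<Rightarrow> None)"

primrec subterm_at :: "lterm \<Rightarrow> dir list \<Rightarrow> lterm option" where
  "subterm_at M [] = Some M"
| "subterm_at M (d # p) = (case step d M of None \<Rightarrow> None | Some P \<Rightarrow> subterm_at P p)"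

definition infinite_branch :: "lterm \<Rightarrow> (nat \<Rightarrow> dir) \<Rightarrow> bool" where
  "infinite_branch M f \<longleftrightarrow> (\<forall>n. subterm_at M (map f [0..<n]) \<noteq> None)"

definition Lambda001 :: "lterm set" where
  "Lambda001 = {M. \<forall>f. infinite_branch M f \<longrightarrow> infinite {i. f i = DArg}}"

datatype rterm = RVar nat | RLam rterm | RApp rterm "rterm multiset"

inductive taylor_approx :: "rterm \<Rightarrow> lterm \<Rightarrow> bool" where
  tvar: "taylor_approx (RVar x) (Var x)"
| tlam: "taylor_approx s M \<Longrightarrow> taylor_approx (RLam s) (Lam M)"
| tapp: "taylor_approx s M \<Longrightarrow> (\<forall>t\<in>#ts. taylor_approx t N) \<Longrightarrow>
         taylor_approx (RApp s ts) (App M N)"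

definition taylor :: "lterm \<Rightarrow> rterm set" where
  "taylor M = {s. taylor_approx s M}"

definition no_bot_redex :: "lterm \<Rightarrow> bool" where
  "no_bot_redex M \<longleftrightarrow> (\<forall>p. subterm_at M p \<noteq> Some (Lam Bot) \<and>
                              (\<forall>P. subterm_at M p \<noteq> Some (App Bot P)))"

end

theory Submission
  imports Defs
begin

lemma subterm_at_append:
  "subterm_at M (p @ q) = (case subterm_at M p of None \<Rightarrow> None | Some P \<Rightarrow> subterm_at P q)"
  by (induction p arbitrary: M) (auto split: option.splits)

lemma map_case_nat: "map (case_nat d f) [0..<Suc n] = d # map f [0..<n]"
  by (simp add: upt_conv_Cons map_Suc_upt[symmetric] del: upt_Suc)

lemma L001_sub:
  assumes "M \<in> Lambda001" and "step d M = Some P"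
  shows "P \<in> Lambda001"
  unfolding Lambda001_def mem_Collect_eq
proof (intro allI impI)
  fix f assume fb: "infinite_branch P f"
  let ?g = "case_nat d f"
  have "infinite_branch M ?g"
    unfolding infinite_branch_def
  proof
    fix n
    show "subterm_at M (map ?g [0..<n]) \<noteq> None"
    proof (cases n)
      case 0 then show ?thesis by simp
    next
      case (Suc m)
      then show ?thesis using fb assms(2) unfolding infinite_branch_def
        by (simp only: map_case_nat) simp
    qed
  qed
  then have "infinite {i. ?g i = DArg}" using assms(1) unfolding Lambda001_def by blast
  moreover have "{i. ?g i = DArg} \<subseteq> insert 0 (Suc ` {i. f i = DArg})"
  proof
    fix i assume "i \<in> {i. ?g i = DArg}"
    then show "i \<in> insert 0 (Suc ` {i. f i = DArg})" by (cases i) auto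
  qed
  ultimately show "infinite {i. f i = DArg}"
    using finite_subset by blast
qed

lemma nbr_sub:
  assumes "no_bot_redex M" and "step d M = Some P"
  shows "no_bot_redex P"
  unfolding no_bot_redex_def
proof
  fix p
  have "subterm_at M (d # p) = subterm_at P p" using assms(2) by simp
  then show "subterm_at P p \<noteq> Some (Lam Bot) \<and> (\<forall>Q. subterm_at P p \<noteq> Some (App Bot Q))"
    using assms(1) unfolding no_bot_redex_def by (metis (no_types))
qed

definition nxt :: "lterm \<Rightarrow> lterm" where
  "nxt M = (case M of Lam P \<Rightarrow> P | App P Q \<Rightarrow> P | _ \<Rightarrow> M)"
definition ndir :: "lterm \<Rightarrow> dir" where
  "ndir M = (case M of Lam P \<Rightarrow> DLam | _ \<Rightarrow> DFun)"

lemma has_approx: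
  assumes "M \<in> Lambda001" "no_bot_redex M" "M \<noteq> Bot"
  shows "\<exists>s. taylor_approx s M"
proof (rule ccontr)
  assume na: "\<nexists>s. taylor_approx s M"
  define g where "g n = (nxt ^^ n) M" for n
  define f where "f n = ndir (g n)" for n
  have inv: "g n \<noteq> Bot \<and> (\<nexists>s. taylor_approx s (g n)) \<and> subterm_at M (map f [0..<n]) = Some (g n)" for n
  proof (induction n)
    case 0 then show ?case using na assms by (simp add: g_def)
  next
    case (Suc n)
    then have nb: "g n \<noteq> Bot" and nap: "\<nexists>s. taylor_approx s (g n)"
      and sa: "subterm_at M (map f [0..<n]) = Some (g n)" by auto
    have gs: "g (Suc n) = nxt (g n)" by (simp add: g_def)
    show ?case
    proof (cases "g n")
      case (Var x) then have "taylor_approx (RVar x) (g n)" by (simp add: taylor_approx.tvar)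
      then have False using nap by blast
      then show ?thesis ..
    next
      case Bot then show ?thesis using nb by simp
    next
      case (Lam P)
      have sa2: "subterm_at M (map f [0..<Suc n]) = Some P"
        using sa Lam by (simp add: subterm_at_append f_def ndir_def)
      have "subterm_at M (map f [0..<n]) \<noteq> Some (Lam Bot)" using assms(2)[unfolded no_bot_redex_def, rule_format, of "map f [0..<n]"] by simp
      then have "P \<noteq> Bot" using sa Lam by auto
      moreover have "\<nexists>s. taylor_approx s P"
      proof
        assume "\<exists>s. taylor_approx s P"
        then obtain s where "taylor_approx s P" by blast
        then have "taylor_approx (RLam s) (Lam P)" by (simp add: taylor_approx.tlam)
        then show False using nap Lam by simp
      qed
      ultimately show ?thesis using gs Lam sa2 by (simp add: nxt_def)
    next
      case (App P Q)
      have sa2: "subterm_at M (map f [0..<Suc n]) = Some P"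
        using sa App by (simp add: subterm_at_append f_def ndir_def)
      have "subterm_at M (map f [0..<n]) \<noteq> Some (App Bot Q)" using assms(2)[unfolded no_bot_redex_def, rule_format, of "map f [0..<n]"] by simp
      then have "P \<noteq> Bot" using sa App by auto
      moreover have "\<nexists>s. taylor_approx s P"
      proof
        assume "\<exists>s. taylor_approx s P"
        then obtain s where "taylor_approx s P" by blast
        then have "taylor_approx (RApp s {#}) (App P Q)" by (simp add: taylor_approx.tapp)
        then show False using nap App by simp
      qed
      ultimately show ?thesis using gs App sa2 by (simp add: nxt_def)
    qed
  qed
  have "infinite_branch M f" unfolding infinite_branch_def using inv by simp
  then have "infinite {i. f i = DArg}" using assms(1) unfolding Lambda001_def by blast
  moreover have "{i. f i = DArg} = {}" by (auto simp: f_def ndir_def split: lterm.splits)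
  ultimately show False by simp
qed

definition RR where
  "RR M N \<longleftrightarrow> M \<in> Lambda001 \<and> N \<in> Lambda001 \<and> no_bot_redex M \<and> no_bot_redex N \<and> taylor M = taylor N"

lemma RR_sym: "RR M N \<Longrightarrow> RR N M" unfolding RR_def by auto

lemma inv_var: "taylor_approx (RVar x) N \<longleftrightarrow> N = Var x"
  by (auto elim: taylor_approx.cases intro: taylor_approx.intros)
lemma inv_lam: "taylor_approx (RLam s) N \<longleftrightarrow> (\<exists>P. N = Lam P \<and> taylor_approx s P)"
  by (auto elim: taylor_approx.cases intro: taylor_approx.intros)
lemma inv_app: "taylor_approx (RApp s ts) N \<longleftrightarrow> (\<exists>P Q. N = App P Q \<and> taylor_approx s P \<and> (\<forall>t\<in>#ts. taylor_approx t Q))"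
  by (auto elim: taylor_approx.cases intro: taylor_approx.intros)
lemma inv_bot: "\<not> taylor_approx s Bot"
  by (auto elim: taylor_approx.cases)

lemma RR_step:
  assumes "RR M N"
  shows "(\<exists>x. M = Var x \<and> N = Var x) \<or> (M = Bot \<and> N = Bot) \<or>
         (\<exists>P Q. M = Lam P \<and> N = Lam Q \<and> RR P Q) \<or>
         (\<exists>P1 P2 Q1 Q2. M = App P1 P2 \<and> N = App Q1 Q2 \<and> RR P1 Q1 \<and> RR P2 Q2)"
proof -
  from assms have A: "M \<in> Lambda001" "N \<in> Lambda001" "no_bot_redex M" "no_bot_redex N"
    and T: "\<And>s. taylor_approx s M \<longleftrightarrow> taylor_approx s N"
    unfolding RR_def taylor_def by (auto simp: set_eq_iff)
  show ?thesis
  proof (cases M)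
    case (Var x)
    then have "taylor_approx (RVar x) N" using T taylor_approx.tvar by blast
    then show ?thesis using Var inv_var by blast
  next
    case Bot
    have "N = Bot"
    proof (rule ccontr)
      assume "N \<noteq> Bot"
      then obtain s where "taylor_approx s N" using has_approx A by blast
      then show False using T Bot inv_bot by blast
    qed
    then show ?thesis using Bot by simp
  next
    case (Lam P)
    have PB: "P \<noteq> Bot" using A(3) Lam unfolding no_bot_redex_def
      by (metis (no_types) subterm_at.simps(1))
    have sP: "step DLam M = Some P" using Lam by simp
    obtain s where "taylor_approx s P" using has_approx[OF L001_sub[OF A(1) sP] nbr_sub[OF A(3) sP] PB] by blast
    then have "taylor_approx (RLam s) N" using T Lam taylor_approx.tlam by blast
    then obtain Q where NQ: "N = Lam Q" using inv_lam by blast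
    have sQ: "step DLam N = Some Q" using NQ by simp
    have "\<And>t. taylor_approx t P \<longleftrightarrow> taylor_approx t Q"
      using T[of "RLam _"] Lam NQ inv_lam by auto
    then have "RR P Q" unfolding RR_def taylor_def
      using L001_sub[OF A(1) sP] nbr_sub[OF A(3) sP] L001_sub[OF A(2) sQ] nbr_sub[OF A(4) sQ] by auto
    then show ?thesis using Lam NQ by blast
  next
    case (App P1 P2)
    have PB: "P1 \<noteq> Bot" using A(3) App unfolding no_bot_redex_def
      by (metis (no_types) subterm_at.simps(1))
    have s1: "step DFun M = Some P1" and s2: "step DArg M = Some P2" using App by simp_all
    obtain s where s: "taylor_approx s P1" using has_approx[OF L001_sub[OF A(1) s1] nbr_sub[OF A(3) s1] PB] by blast
    then have "taylor_approx (RApp s {#}) M" using App taylor_approx.tapp by simp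
    then have "taylor_approx (RApp s {#}) N" using T by blast
    then obtain Q1 Q2 where NQ: "N = App Q1 Q2" using inv_app by blast
    have t1: "step DFun N = Some Q1" and t2: "step DArg N = Some Q2" using NQ by simp_all
    have E1: "taylor_approx t P1 \<longleftrightarrow> taylor_approx t Q1" for t
      using T[of "RApp t {#}"] App NQ inv_app by auto
    have E2: "taylor_approx t P2 \<longleftrightarrow> taylor_approx t Q2" for t
    proof -
      have "taylor_approx s Q1" using E1 s by blast
      then show ?thesis using T[of "RApp s {#t#}"] App NQ inv_app s by auto
    qed
    have "RR P1 Q1" unfolding RR_def taylor_def
      using L001_sub[OF A(1) s1] nbr_sub[OF A(3) s1] L001_sub[OF A(2) t1] nbr_sub[OF A(4) t1] E1 by auto
    moreover have "RR P2 Q2" unfolding RR_def taylor_def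
      using L001_sub[OF A(1) s2] nbr_sub[OF A(3) s2] L001_sub[OF A(2) t2] nbr_sub[OF A(4) t2] E2 by auto
    ultimately show ?thesis using App NQ by blast
  qed
qed

theorem mainTheorem14:
  assumes "M \<in> Lambda001" and "N \<in> Lambda001"
    and "no_bot_redex M" and "no_bot_redex N"
    and "taylor M = taylor N"
  shows "M = N"
proof -
  have "RR M N" using assms unfolding RR_def by simp
  then show ?thesis
  proof (coinduction arbitrary: M N rule: lterm.coinduct)
    case (Eq_lterm M N)
    from RR_step[OF Eq_lterm] show ?case by auto
  qed
qed

end
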